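(* Let $\mathcal{E}$ be a $d$-dimensional Riemannian vector bundle over a topological space $X$, and let $\mu$ be a probability measure on $\mathrm{Aut}_{\mathrm{vol}}(\mathcal{E})$. Then $\mu$ is coexpanding on average if and only if it is expanding on average on $(d-1)$-planes.
   Context: $\mathrm{Aut}_{\mathrm{vol}}(\mathcal{E})$ denotes vector bundle automorphisms $F$ of $\mathcal{E}$ (covering homeomorphisms of $X$) preserving a fixed fiberwise volume form. For a measure $\mu$ on automorphisms, $\mu^n$ is the law of $F_n\circ\cdots\circ F_1$ with $F_i$ i.i.d. of law $\mu$. $\mu$ is expanding on average if there are $N,\lambda>0$ with $\int\ln\|F v\|\,d\mu^N(F)>\lambda$ for every unit vector $v\in\mathcal{E}$. $\mu$ is expanding on average on $k$-planes if there are $N,\lambda>0$ such that for every $k$-dimensional subspace $V$ of a fiber of $\mathcal{E}$, $\int\ln\|F|_{\mathrm{vol}_V}\|\,d\mu^N(F)>\lambda$, where $\|F|_{\mathrm{vol}_V}\|$ is the factor by which $F$ multiplies $k$-dimensional volume on $V$. $\mu$ is coexpanding on average if the induced random bundle maps $(F^* )^{-1}$ on the dual bundle $\mathcal{E}^*$ (covering the same base maps) are expanding on average. *)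

theory Defs
  imports "HOL-Probability.Probability"
begin

text \<open>Model of a rank-d Riemannian vector bundle (d = CARD('d)).
  The total space is a topology on pairs (x, v) with x in the base and v in real^'d,
  where each fiber carries the standard inner product of real^'d (an orthonormal
  identification of the fiber, chosen pointwise, not necessarily continuously).\<close>

definition riemannian_bundle :: "'a topology \<Rightarrow> ('a \<times> (real^'d)) topology \<Rightarrow> bool" where
  "riemannian_bundle X T \<longleftrightarrow>
     topspace T = topspace X \<times> UNIV \<and>
     continuous_map T X fst \<and>
     (\<forall>x\<in>topspace X. \<exists>U L. openin X U \<and> x \<in> U \<and>
        (\<forall>y\<in>U. linear (L y :: real^'d \<Rightarrow> real^'d) \<and> bij (L y)) \<and>
        homeomorphic_map (subtopology T (U \<times> UNIV))
          (prod_topology (subtopology X U) euclidean) (\<lambda>(y, v). (y, L y v))) \<and>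
     continuous_map (subtopology (prod_topology T T) {((x, v), (y, w)). x = y})
       euclideanreal (\<lambda>((x, v), (y, w)). v \<bullet> w)"

definition fib :: "('a \<times> (real^'d) \<Rightarrow> 'a \<times> (real^'d)) \<Rightarrow> 'a \<Rightarrow> real^'d \<Rightarrow> real^'d" where
  "fib F x = (\<lambda>v. snd (F (x, v)))"

definition bundle_aut ::
  "'a topology \<Rightarrow> ('a \<times> (real^'d)) topology \<Rightarrow> ('a \<times> (real^'d) \<Rightarrow> 'a \<times> (real^'d)) \<Rightarrow> bool" where
  "bundle_aut X T F \<longleftrightarrow>
     homeomorphic_map T T F \<and>
     (\<exists>f. homeomorphic_map X X f \<and> (\<forall>x\<in>topspace X. \<forall>v. fst (F (x, v)) = f x)) \<and>
     (\<forall>x\<in>topspace X. linear (fib F x))"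

definition aut_vol ::
  "'a topology \<Rightarrow> ('a \<times> (real^'d)) topology \<Rightarrow> ('a \<times> (real^'d) \<Rightarrow> 'a \<times> (real^'d)) set" where
  "aut_vol X T = {F. bundle_aut X T F \<and> (\<forall>x\<in>topspace X. \<bar>det (matrix (fib F x))\<bar> = 1)}"

text \<open>F_n o ... o F_1 where F_(i+1) = w i.\<close>
fun iter_comp :: "(nat \<Rightarrow> ('b \<Rightarrow> 'b)) \<Rightarrow> nat \<Rightarrow> 'b \<Rightarrow> 'b" where
  "iter_comp w 0 = id"
| "iter_comp w (Suc n) = w n \<circ> iter_comp w n"

text \<open>Integral with respect to the law mu^N of F_N o ... o F_1, F_i iid of law mu.\<close>
definition conv_integral ::
  "('b \<Rightarrow> 'b) measure \<Rightarrow> nat \<Rightarrow> (('b \<Rightarrow> 'b) \<Rightarrow> real) \<Rightarrow> real" where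
  "conv_integral \<mu> N g = (\<integral>w. g (iter_comp w N) \<partial>(PiM {..<N} (\<lambda>_. \<mu>)))"

definition expanding_on_average ::
  "'a topology \<Rightarrow> ('a \<times> (real^'d) \<Rightarrow> 'a \<times> (real^'d)) measure \<Rightarrow> bool" where
  "expanding_on_average X \<mu> \<longleftrightarrow>
     (\<exists>N::nat. \<exists>c>0. \<forall>x\<in>topspace X. \<forall>v::real^'d. norm v = 1 \<longrightarrow>
        conv_integral \<mu> N (\<lambda>F. ln (norm (fib F x v))) > c)"

definition gram_det :: "(nat \<Rightarrow> real^'d) \<Rightarrow> nat \<Rightarrow> real" where
  "gram_det b k = (\<Sum>p | p permutes {..<k}. of_int (sign p) * (\<Prod>i<k. b i \<bullet> b (p i)))"

text \<open>Factor by which A multiplies k-dimensional volume on the k-dimensional subspace V: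
  the square root of the Gram determinant of the images of an orthonormal basis of V.\<close>
definition vol_factor :: "(real^'d \<Rightarrow> real^'d) \<Rightarrow> (real^'d) set \<Rightarrow> nat \<Rightarrow> real" where
  "vol_factor A V k =
     (let b = (SOME b. (\<forall>i<k. \<forall>j<k. b i \<bullet> b j = (if i = j then 1 else 0)) \<and>
                        span (b ` {..<k}) = V)
      in sqrt (gram_det (A \<circ> b) k))"

definition expanding_on_average_planes ::
  "'a topology \<Rightarrow> ('a \<times> (real^'d) \<Rightarrow> 'a \<times> (real^'d)) measure \<Rightarrow> nat \<Rightarrow> bool" where
  "expanding_on_average_planes X \<mu> k \<longleftrightarrow>
     (\<exists>N::nat. \<exists>c>0. \<forall>x\<in>topspace X. \<forall>V::(real^'d) set. subspace V \<and> dim V = k \<longrightarrow>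
        conv_integral \<mu> N (\<lambda>F. ln (vol_factor (fib F x) V k)) > c)"

text \<open>Coexpanding: the dual maps (F^*)^{-1}, xi \<mapsto> xi o (F_x)^{-1}, on the dual bundle
  (dual fibers = linear functionals with the dual (operator) norm) are expanding on average.\<close>
definition coexpanding_on_average ::
  "'a topology \<Rightarrow> ('a \<times> (real^'d) \<Rightarrow> 'a \<times> (real^'d)) measure \<Rightarrow> bool" where
  "coexpanding_on_average X \<mu> \<longleftrightarrow>
     (\<exists>N::nat. \<exists>c>0. \<forall>x\<in>topspace X. \<forall>\<xi>::real^'d \<Rightarrow> real. linear \<xi> \<and> onorm \<xi> = 1 \<longrightarrow>
        conv_integral \<mu> N (\<lambda>F. ln (onorm (\<xi> \<circ> inv (fib F x)))) > c)"

end

theory Submission imports Defs "Jordan_Normal_Form.Determinant" begin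
no_notation Matrix.vec_index (infixl \<open>$\<close> 100)
unbundle no m_inv_syntax

lemma linS: "linear (A :: real^'n \<Rightarrow> real^'m) \<Longrightarrow> Vector_Spaces.linear (*s) (*s) A"
  by (simp add: linear_def scalar_mult_eq_scaleR)

lemma det_bridge:
  fixes M :: "real^'n^'n" and e :: "nat \<Rightarrow> 'n"
  assumes e: "bij_betw e {..<CARD('n)} UNIV"
  shows "Determinants.det M = Determinant.det (Matrix.mat CARD('n) CARD('n) (\<lambda>(i,j). M $ e i $ e j))"
proof -
  define d where "d = CARD('n)"
  define e' where "e' = inv_into {..<d} e"
  have e2: "bij_betw e {..<d} UNIV" using e d_def by simp
  have e'b: "bij_betw e' UNIV {..<d}" unfolding e'_def by (rule bij_betw_inv_into[OF e2])
  have ee': "e (e' x) = x" for x unfolding e'_def using e2 bij_betw_inv_into_right by fastforce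
  have e'e: "x \<in> {..<d} \<Longrightarrow> e' (e x) = x" for x unfolding e'_def using e2 bij_betw_inv_into_left by fastforce
  have inj: "inj_on e {..<d}" using e2 bij_betw_imp_inj_on by blast
  have "Determinant.det (Matrix.mat d d (\<lambda>(i,j). M $ e i $ e j)) =
     (\<Sum>p | p permutes {0..<d}. of_int (sign p) * (\<Prod>i=0..<d. Matrix.mat d d (\<lambda>(i,j). M $ e i $ e j) $$ (i, p i)))"
    by (rule det_def') auto
  also have "\<dots> = (\<Sum>p | p permutes {..<d}. of_int (sign p) * (\<Prod>i<d. M $ e i $ e (p i)))"
  proof (rule sum.cong)
    show "{p. p permutes {0..<d}} = {p. p permutes {..<d}}" by (simp add: atLeast0LessThan)
  next
    fix p assume "p \<in> {p. p permutes {..<d}}"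
    hence p: "p permutes {..<d}" by simp
    have "(\<Prod>i=0..<d. Matrix.mat d d (\<lambda>(i,j). M $ e i $ e j) $$ (i, p i)) = (\<Prod>i<d. M $ e i $ e (p i))"
      apply (rule prod.cong)
       apply (simp add: atLeast0LessThan)
      subgoal for i using permutes_in_image[OF p, of i] by simp
      done
    thus "of_int (sign p) * (\<Prod>i=0..<d. Matrix.mat d d (\<lambda>(i,j). M $ e i $ e j) $$ (i, p i)) = of_int (sign p) * (\<Prod>i<d. M $ e i $ e (p i))" by simp
  qed
  also have "\<dots> = (\<Sum>q | q permutes (UNIV::'n set). of_int (sign q) * (\<Prod>t\<in>UNIV. M $ t $ q t))"
  proof (rule sum.reindex_bij_witness[where i = "map_permutation UNIV e'" and j = "map_permutation {..<d} e"])
    fix a assume "a \<in> {p. p permutes {..<d}}"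
    hence a: "a permutes {..<d}" by simp
    show "map_permutation UNIV e' (map_permutation {..<d} e a) = a"
      by (rule map_permutation_compose_inv[OF e2 a e'e])
    show "map_permutation {..<d} e a \<in> {q. q permutes UNIV}"
      using map_permutation_permutes[OF e2 a] by simp
    have s: "sign (map_permutation {..<d} e a) = sign a" by (rule sign_map_permutation[OF inj a]) simp
    have "(\<Prod>t\<in>UNIV. M $ t $ map_permutation {..<d} e a t) = (\<Prod>i<d. M $ e i $ map_permutation {..<d} e a (e i))"
      by (rule prod.reindex_bij_betw[OF e2, symmetric])
    also have "\<dots> = (\<Prod>i<d. M $ e i $ e (a i))"
      by (rule prod.cong) (auto simp: map_permutation_apply[OF inj])
    finally show "of_int (sign (map_permutation {..<d} e a)) * (\<Prod>t\<in>UNIV. M $ t $ map_permutation {..<d} e a t) = of_int (sign a) * (\<Prod>i<d. M $ e i $ e (a i))"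
      using s by simp
  next
    fix b assume "b \<in> {q. q permutes (UNIV::'n set)}"
    hence b: "b permutes (UNIV::'n set)" by simp
    show "map_permutation {..<d} e (map_permutation UNIV e' b) = b"
      by (rule map_permutation_compose_inv[OF e'b b]) (simp add: ee')
    show "map_permutation UNIV e' b \<in> {p. p permutes {..<d}}"
      using map_permutation_permutes[OF e'b b] by simp
  qed
  also have "\<dots> = Determinants.det M" by (simp add: Determinants.det_def)
  finally show ?thesis by (simp add: d_def)
qed

lemma detG_lemma:
  fixes A :: "real^'d \<Rightarrow> real^'d" and \<beta> :: "nat \<Rightarrow> real^'d"
  assumes lin: "linear A" and dt: "\<bar>Determinants.det (matrix A)\<bar> = 1"
   and \<beta>o: "\<And>i j. i < CARD('d) \<Longrightarrow> j < CARD('d) \<Longrightarrow> \<beta> i \<bullet> \<beta> j = (if i = j then 1 else 0)"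
  shows "Determinant.det (Matrix.mat CARD('d) CARD('d) (\<lambda>(i,j). A (\<beta> i) \<bullet> A (\<beta> j))) = 1"
proof -
  define d where "d = CARD('d)"
  obtain e :: "nat \<Rightarrow> 'd" where e: "bij_betw e {..<d} UNIV"
    using ex_bij_betw_nat_finite[of "UNIV::'d set"] by (auto simp: d_def atLeast0LessThan)
  define e' where "e' = inv_into {..<d} e"
  have e'b: "bij_betw e' UNIV {..<d}" unfolding e'_def by (rule bij_betw_inv_into[OF e])
  have ee': "e (e' x) = x" for x unfolding e'_def using e bij_betw_inv_into_right by fastforce
  have e'e: "x \<in> {..<d} \<Longrightarrow> e' (e x) = x" for x unfolding e'_def using e bij_betw_inv_into_left by fastforce
  have e'lt: "e' s < d" for s using e'b by (auto simp: bij_betw_def)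
  define Q :: "real^'d^'d" where "Q = (\<chi> i t. \<beta> (e' t) $ i)"
  define P where "P = matrix A ** Q"
  have Pc: "P $ i $ t = A (\<beta> (e' t)) $ i" for i t
  proof -
    have "P $ i $ t = (matrix A *v \<beta> (e' t)) $ i"
      by (simp add: P_def Q_def matrix_matrix_mult_def matrix_vector_mult_def)
    also have "\<dots> = A (\<beta> (e' t)) $ i" by (simp add: matrix_works[OF linS[OF lin]])
    finally show ?thesis .
  qed
  have QQ: "transpose Q ** Q = Finite_Cartesian_Product.mat 1"
  proof -
    have "(transpose Q ** Q) $ s $ t = Finite_Cartesian_Product.mat 1 $ s $ t" for s t
    proof -
      have "(transpose Q ** Q) $ s $ t = \<beta> (e' s) \<bullet> \<beta> (e' t)"
        by (simp add: Q_def matrix_matrix_mult_def transpose_def inner_vec_def)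
      also have "\<dots> = (if s = t then 1 else 0)"
        using \<beta>o[of "e' s" "e' t"] e'lt[of s] e'lt[of t] ee'[of s] ee'[of t] unfolding d_def
        by (metis)
      finally show ?thesis by (simp add: Finite_Cartesian_Product.mat_def)
    qed
    thus ?thesis by (simp add: Finite_Cartesian_Product.vec_eq_iff)
  qed
  have dQ: "Determinants.det Q * Determinants.det Q = 1"
    using arg_cong[OF QQ, of Determinants.det] by (simp add: det_mul det_transpose det_I)
  have dA: "Determinants.det (matrix A) * Determinants.det (matrix A) = 1"
    using dt by (metis abs_mult_self_eq mult_1_left)
  have "Matrix.mat d d (\<lambda>(i,j). A (\<beta> i) \<bullet> A (\<beta> j)) = Matrix.mat d d (\<lambda>(i,j). (transpose P ** P) $ e i $ e j)"
  proof (rule eq_matI)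
    fix i j assume ij: "i < dim_row (Matrix.mat d d (\<lambda>(i,j). (transpose P ** P) $ e i $ e j))"
       "j < dim_col (Matrix.mat d d (\<lambda>(i,j). (transpose P ** P) $ e i $ e j))"
    hence ij': "i < d" "j < d" by auto
    have "(transpose P ** P) $ e i $ e j = A (\<beta> i) \<bullet> A (\<beta> j)"
      using ij' by (simp add: matrix_matrix_mult_def transpose_def inner_vec_def Pc e'e)
    thus "Matrix.mat d d (\<lambda>(i,j). A (\<beta> i) \<bullet> A (\<beta> j)) $$ (i, j) = Matrix.mat d d (\<lambda>(i,j). (transpose P ** P) $ e i $ e j) $$ (i, j)"
      using ij' by simp
  qed auto
  also have "Determinant.det \<dots> = Determinants.det (transpose P ** P)"
    using det_bridge[of e "transpose P ** P"] e by (simp add: d_def)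
  also have "\<dots> = (Determinants.det (matrix A) * Determinants.det (matrix A)) * (Determinants.det Q * Determinants.det Q)"
    by (simp add: det_mul det_transpose P_def algebra_simps)
  also have "\<dots> = 1" using dQ dA by simp
  finally show ?thesis by (simp add: d_def)
qed
lemma key_gram:
  fixes A :: "real^'d \<Rightarrow> real^'d" and n :: "real^'d" and b :: "nat \<Rightarrow> real^'d"
  assumes lin: "linear A" and dt: "\<bar>Determinants.det (matrix A)\<bar> = 1" and nn: "norm n = 1"
    and orth: "\<And>i j. i < k \<Longrightarrow> j < k \<Longrightarrow> b i \<bullet> b j = (if i = j then 1 else 0)"
    and perp: "\<And>i. i < k \<Longrightarrow> n \<bullet> b i = 0" and k: "k = CARD('d) - 1"
    and detG: "\<And>\<beta>. (\<And>i j. i < CARD('d) \<Longrightarrow> j < CARD('d) \<Longrightarrow> \<beta> i \<bullet> \<beta> j = (if i = j then 1 else 0)) \<Longrightarrow>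
        Determinant.det (Matrix.mat CARD('d) CARD('d) (\<lambda>(i,j). A (\<beta> i) \<bullet> A (\<beta> j))) = 1"
  shows "gram_det (A \<circ> b) k = (norm (adjoint (inv_into UNIV A) n))\<^sup>2"
proof -
  define d where "d = CARD('d)"
  have dk: "d = Suc k" using k unfolding d_def by (simp add: Suc_diff_1)
  define \<beta> where "\<beta> i = (if i < k then b i else n)" for i
  have nn2: "n \<bullet> n = 1" using nn by (simp add: dot_square_norm)
  have \<beta>o: "\<beta> i \<bullet> \<beta> j = (if i = j then 1 else 0)" if "i < d" "j < d" for i j
    using that orth perp nn2 unfolding \<beta>_def dk
    by (auto simp: inner_commute less_Suc_eq)
  have dtnz: "Determinants.det (matrix A) \<noteq> 0" using dt by auto
  obtain g where g: "linear g" "A \<circ> g = id" "g \<circ> A = id"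
    using matrix_invertible[OF lin] invertible_det_nz dtnz by blast
  define A' where "A' = inv_into UNIV A"
  have A'g: "A' = g" unfolding A'_def by (rule inv_unique_comp[OF g(2,3)])
  have linA': "linear A'" using g(1) A'g by simp
  have AA': "A (A' y) = y" for y using g(2) A'g by (metis comp_apply id_apply)
  have A'A: "A' (A y) = y" for y using g(3) A'g by (metis comp_apply id_apply)
  define c where "c i = adjoint A' (\<beta> i)" for i
  have Ac: "A x \<bullet> c j = x \<bullet> \<beta> j" for x j
    unfolding c_def adjoint_works[OF linA'] A'A ..
  have injb: "inj_on \<beta> {..<d}"
  proof (rule inj_onI)
    fix i j assume ij: "i \<in> {..<d}" "j \<in> {..<d}" "\<beta> i = \<beta> j"
    show "i = j"
    proof (rule ccontr)
      assume "i \<noteq> j"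
      hence "\<beta> i \<bullet> \<beta> j = 0" using \<beta>o[of i j] ij(1,2) by simp
      moreover have "\<beta> i \<bullet> \<beta> i = 1" using \<beta>o[of i i] ij(1,2) by simp
      ultimately show False using ij by simp
    qed
  qed
  have indep: "independent (\<beta> ` {..<d})"
  proof (rule pairwise_orthogonal_independent)
    show "pairwise real_inner_class.orthogonal (\<beta> ` {..<d})"
      unfolding pairwise_def real_inner_class.orthogonal_def using \<beta>o by auto
    show "0 \<notin> \<beta> ` {..<d}" using \<beta>o by force
  qed
  have cardb: "card (\<beta> ` {..<d}) = d" using card_image[OF injb] by simp
  have spanU: "x \<in> span (\<beta> ` {..<d})" for x
  proof -
    have "(UNIV :: (real^'d) set) \<subseteq> span (\<beta> ` {..<d})"
      by (rule card_ge_dim_independent) (use indep cardb in \<open>auto simp: d_def\<close>)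
    thus ?thesis by auto
  qed
  have expand: "x = (\<Sum>l<d. (\<beta> l \<bullet> x) *\<^sub>R \<beta> l)" for x
  proof -
    define y where "y = x - (\<Sum>l<d. (\<beta> l \<bullet> x) *\<^sub>R \<beta> l)"
    have yo: "y \<bullet> z = 0" if zin: "z \<in> \<beta> ` {..<d}" for z
    proof -
      obtain i where i: "i < d" "z = \<beta> i" using zin by auto
      have "(\<Sum>l<d. (\<beta> l \<bullet> x) * (\<beta> l \<bullet> \<beta> i)) = (\<Sum>l<d. if l = i then \<beta> i \<bullet> x else 0)"
        by (rule sum.cong) (use \<beta>o i in auto)
      also have "\<dots> = \<beta> i \<bullet> x" using i by simp
      finally show ?thesis unfolding y_def i(2)
        by (simp add: inner_diff_left inner_sum_left inner_commute[of x "\<beta> i"])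
    qed
    have "y \<bullet> y = 0"
      using linear_eq_0_on_span[OF bounded_linear.linear[OF bounded_linear_inner_right[of y]] yo spanU[of y]] by simp
    hence "y = 0" by simp
    thus ?thesis unfolding y_def by simp
  qed
  have expandA: "y = (\<Sum>l<d. (c l \<bullet> y) *\<^sub>R A (\<beta> l))" for y
  proof -
    have "y = A (A' y)" by (simp add: AA')
    also have "A' y = (\<Sum>l<d. (\<beta> l \<bullet> A' y) *\<^sub>R \<beta> l)" by (rule expand)
    also have "A (\<Sum>l<d. (\<beta> l \<bullet> A' y) *\<^sub>R \<beta> l) = (\<Sum>l<d. (\<beta> l \<bullet> A' y) *\<^sub>R A (\<beta> l))"
      by (simp add: linear_sum[OF lin] linear_scale[OF lin])
    also have "\<dots> = (\<Sum>l<d. (c l \<bullet> y) *\<^sub>R A (\<beta> l))"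
    proof (rule sum.cong)
      fix l
      have "c l \<bullet> y = y \<bullet> adjoint A' (\<beta> l)" unfolding c_def by (simp add: inner_commute)
      also have "\<dots> = A' y \<bullet> \<beta> l" by (rule adjoint_works[OF linA'])
      finally show "(\<beta> l \<bullet> A' y) *\<^sub>R A (\<beta> l) = (c l \<bullet> y) *\<^sub>R A (\<beta> l)" by (simp add: inner_commute)
    qed simp
    finally show ?thesis .
  qed
  define G where "G = Matrix.mat d d (\<lambda>(i,j). A (\<beta> i) \<bullet> A (\<beta> j))"
  define H where "H = Matrix.mat d d (\<lambda>(i,j). c i \<bullet> c j)"
  have Gc: "G \<in> carrier_mat d d" and Hc: "H \<in> carrier_mat d d" unfolding G_def H_def by auto
  have GH: "G * H = 1\<^sub>m d"
  proof (rule eq_matI)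
    fix i j assume ij: "i < dim_row (1\<^sub>m d :: real mat)" "j < dim_col (1\<^sub>m d :: real mat)"
    hence ij': "i < d" "j < d" by auto
    have "(G * H) $$ (i, j) = (\<Sum>l<d. (A (\<beta> i) \<bullet> A (\<beta> l)) * (c l \<bullet> c j))"
      using ij' by (simp add: G_def H_def scalar_prod_def atLeast0LessThan)
    also have "\<dots> = A (\<beta> i) \<bullet> (\<Sum>l<d. (c l \<bullet> c j) *\<^sub>R A (\<beta> l))"
      by (simp add: inner_sum_right mult.commute)
    also have "\<dots> = A (\<beta> i) \<bullet> c j" using expandA[of "c j"] by simp
    also have "\<dots> = \<beta> i \<bullet> \<beta> j" by (rule Ac)
    also have "\<dots> = 1\<^sub>m d $$ (i, j)" using \<beta>o ij' by simp
    finally show "(G * H) $$ (i, j) = 1\<^sub>m d $$ (i, j)" .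
  qed (auto simp: G_def H_def)
  have dG: "Determinant.det G = 1" unfolding G_def d_def by (rule detG) (use \<beta>o d_def in auto)
  have adjG: "adj_mat G = H"
  proof -
    have aC: "adj_mat G \<in> carrier_mat d d" by (rule adj_mat(1)[OF Gc])
    have "adj_mat G = adj_mat G * 1\<^sub>m d" using aC by simp
    also have "\<dots> = adj_mat G * (G * H)" by (simp add: GH)
    also have "\<dots> = (adj_mat G * G) * H" using aC Gc Hc by (simp add: assoc_mult_mat)
    finally have e1: "adj_mat G = (adj_mat G * G) * H" .
    have "(1::real) \<cdot>\<^sub>m 1\<^sub>m d = 1\<^sub>m d" by (rule eq_matI) auto
    hence "(adj_mat G * G) * H = H" by (simp add: adj_mat(3)[OF Gc] dG Hc left_mult_one_mat[OF Hc])
    with e1 show ?thesis by simp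
  qed
  have kd: "k < d" using dk by simp
  have "H $$ (k, k) = (norm (adjoint A' n))\<^sup>2"
    using kd by (simp add: H_def c_def \<beta>_def dot_square_norm)
  moreover have "adj_mat G $$ (k, k) = Determinant.det (mat_delete G k k)"
    using kd Gc by (simp add: adj_mat_def cofactor_def)
  moreover have "mat_delete G k k = Matrix.mat k k (\<lambda>(i,j). A (b i) \<bullet> A (b j))"
    by (rule eq_matI) (auto simp: mat_delete_def G_def dk \<beta>_def)
  moreover have "Determinant.det (Matrix.mat k k (\<lambda>(i,j). A (b i) \<bullet> A (b j))) = gram_det (A \<circ> b) k"
  proof -
    have "Determinant.det (Matrix.mat k k (\<lambda>(i,j). A (b i) \<bullet> A (b j))) =
      (\<Sum>p | p permutes {0..<k}. of_int (sign p) * (\<Prod>i=0..<k. Matrix.mat k k (\<lambda>(i,j). A (b i) \<bullet> A (b j)) $$ (i, p i)))"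
      by (rule det_def') auto
    also have "\<dots> = gram_det (A \<circ> b) k"
      unfolding gram_det_def
    proof (rule sum.cong)
      show "{p. p permutes {0..<k}} = {p. p permutes {..<k}}" by (simp add: atLeast0LessThan)
    next
      fix p assume "p \<in> {p. p permutes {..<k}}"
      hence p: "p permutes {..<k}" by simp
      have "(\<Prod>i=0..<k. Matrix.mat k k (\<lambda>(i,j). A (b i) \<bullet> A (b j)) $$ (i, p i)) = (\<Prod>i<k. (A \<circ> b) i \<bullet> (A \<circ> b) (p i))"
        apply (rule prod.cong)
         apply (simp add: atLeast0LessThan)
        subgoal for i using permutes_in_image[OF p, of i] by simp
        done
      thus "of_int (sign p) * (\<Prod>i=0..<k. Matrix.mat k k (\<lambda>(i,j). A (b i) \<bullet> A (b j)) $$ (i, p i)) = of_int (sign p) * (\<Prod>i<k. (A \<circ> b) i \<bullet> (A \<circ> b) (p i))" by simp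
    qed
    finally show ?thesis .
  qed
  ultimately show ?thesis using adjG A'_def by simp
qed

lemma inv_lin:
  fixes A :: "real^'d \<Rightarrow> real^'d"
  assumes lin: "linear A" and dt: "\<bar>Determinants.det (matrix A)\<bar> = 1"
  shows "linear (inv_into UNIV A)"
proof -
  have dtnz: "Determinants.det (matrix A) \<noteq> 0" using dt by auto
  obtain g where g: "linear g" "A \<circ> g = id" "g \<circ> A = id"
    using matrix_invertible[OF lin] invertible_det_nz dtnz by blast
  have "inv_into UNIV A = g" by (rule inv_unique_comp[OF g(2,3)])
  thus ?thesis using g(1) by simp
qed

lemma ortho_exists:
  fixes V :: "(real^'d) set"
  assumes V: "subspace V" and dV: "dim V = k"
  shows "\<exists>b. (\<forall>i<k. \<forall>j<k. b i \<bullet> b j = (if i = j then 1 else 0)) \<and> span (b ` {..<k}) = V"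
proof -
  obtain B where B: "independent B" "B \<subseteq> span V" "V \<subseteq> span B" "card B = dim V"
      "pairwise real_inner_class.orthogonal B"
    using orthogonal_basis_exists by blast
  have fB: "finite B" using B(1) finiteI_independent by blast
  obtain h where h: "bij_betw h {0..<k} B" using ex_bij_betw_nat_finite[OF fB] B(4) dV by auto
  have hB: "i < k \<Longrightarrow> h i \<in> B" for i using h by (auto simp: bij_betw_def)
  have hinj: "i < k \<Longrightarrow> j < k \<Longrightarrow> h i = h j \<Longrightarrow> i = j" for i j
    using h by (auto simp: bij_betw_def inj_on_def)
  have z: "0 \<notin> B" using B(1) dependent_zero by blast
  define b where "b i = (1 / norm (h i)) *\<^sub>R h i" for i
  have hnz: "i < k \<Longrightarrow> h i \<noteq> 0" for i using hB z by force
  have orth: "b i \<bullet> b j = (if i = j then 1 else 0)" if "i < k" "j < k" for i j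
  proof (cases "i = j")
    case True
    then show ?thesis using hnz[OF that(1)]
      by (simp add: b_def dot_square_norm power2_eq_square)
  next
    case False
    hence "h i \<noteq> h j" using hinj that by blast
    hence "h i \<bullet> h j = 0" using B(5) hB that unfolding pairwise_def real_inner_class.orthogonal_def by blast
    thus ?thesis using False by (simp add: b_def)
  qed
  have "span (b ` {..<k}) = span B"
  proof (subst span_eq, intro conjI subsetI)
    fix x assume "x \<in> b ` {..<k}"
    then obtain i where "i < k" "x = b i" by auto
    thus "x \<in> span B" unfolding b_def using hB by (auto intro: span_mul span_base)
  next
    fix x assume "x \<in> B"
    then obtain i where i: "i < k" "x = h i" using h by (auto simp: bij_betw_def atLeast0LessThan)
    have "x = norm (h i) *\<^sub>R b i" using hnz[OF i(1)] i by (simp add: b_def)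
    moreover have "b i \<in> span (b ` {..<k})" using i(1) by (intro span_base) auto
    ultimately show "x \<in> span (b ` {..<k})" by (metis span_mul)
  qed
  also have "span B = V"
  proof
    show "span B \<subseteq> V" using B(2) V by (metis span_eq_iff span_minimal)
    show "V \<subseteq> span B" by (rule B(3))
  qed
  finally show ?thesis using orth by blast
qed

lemma onorm_inner_eq:
  fixes c :: "real^'d"
  shows "onorm (\<lambda>y. c \<bullet> y) = norm c"
proof (rule antisym)
  show "onorm (\<lambda>y. c \<bullet> y) \<le> norm c"
    by (rule onorm_bound) (auto simp: Cauchy_Schwarz_ineq2)
  have bl: "bounded_linear (\<lambda>y. c \<bullet> y)" by (rule bounded_linear_inner_right)
  have "norm (c \<bullet> c) \<le> onorm (\<lambda>y. c \<bullet> y) * norm c" by (rule onorm[OF bl])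
  hence "norm c * norm c \<le> onorm (\<lambda>y. c \<bullet> y) * norm c"
    by (simp add: dot_square_norm power2_eq_square)
  moreover have "0 \<le> onorm (\<lambda>y. c \<bullet> y)" by (rule onorm_pos_le[OF bl])
  ultimately show "norm c \<le> onorm (\<lambda>y. c \<bullet> y)"
    by (cases "c = 0") (auto simp: mult_le_cancel_right)
qed

lemma pw:
  fixes A :: "real^'d \<Rightarrow> real^'d" and n :: "real^'d"
  assumes lin: "linear A" and dt: "\<bar>Determinants.det (matrix A)\<bar> = 1" and nn: "norm n = 1"
    and V: "subspace V" and dV: "dim V = CARD('d) - 1" and perp: "\<forall>v\<in>V. n \<bullet> v = 0"
  shows "onorm ((\<lambda>y. n \<bullet> y) \<circ> inv_into UNIV A) = vol_factor A V (CARD('d) - 1)"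
proof -
  define k where "k = CARD('d) - 1"
  define P where "P = (\<lambda>b. (\<forall>i<k. \<forall>j<k. b i \<bullet> b j = (if i = j then (1::real) else 0)) \<and> span (b ` {..<k}) = V)"
  define b where "b = (SOME b. P b)"
  have ex: "\<exists>b. P b" using ortho_exists[OF V dV] unfolding P_def k_def .
  have Pb: "P b" unfolding b_def by (rule someI_ex[OF ex])
  have bV: "i < k \<Longrightarrow> b i \<in> V" for i using Pb unfolding P_def by (metis lessThan_iff image_eqI span_base)
  have g: "gram_det (A \<circ> b) k = (norm (adjoint (inv_into UNIV A) n))\<^sup>2"
  proof (rule key_gram[OF lin dt nn])
    show "\<And>i j. i < k \<Longrightarrow> j < k \<Longrightarrow> b i \<bullet> b j = (if i = j then 1 else 0)" using Pb P_def by blast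
    show "\<And>i. i < k \<Longrightarrow> n \<bullet> b i = 0" using bV perp by blast
    show "k = CARD('d) - 1" by (simp add: k_def)
    show "\<And>\<beta>. (\<And>i j. i < CARD('d) \<Longrightarrow> j < CARD('d) \<Longrightarrow> \<beta> i \<bullet> \<beta> j = (if i = j then 1 else 0)) \<Longrightarrow>
        Determinant.det (Matrix.mat CARD('d) CARD('d) (\<lambda>(i,j). A (\<beta> i) \<bullet> A (\<beta> j))) = 1"
      by (rule detG_lemma[OF lin dt])
  qed
  have "vol_factor A V k = sqrt (gram_det (A \<circ> b) k)"
    unfolding vol_factor_def Let_def b_def P_def by simp
  also have "\<dots> = norm (adjoint (inv_into UNIV A) n)" using g by simp
  also have "\<dots> = onorm ((\<lambda>y. n \<bullet> y) \<circ> inv_into UNIV A)"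
  proof -
    have "((\<lambda>y. n \<bullet> y) \<circ> inv_into UNIV A) = (\<lambda>y. adjoint (inv_into UNIV A) n \<bullet> y)"
    proof
      fix y
      have "y \<bullet> adjoint (inv_into UNIV A) n = inv_into UNIV A y \<bullet> n"
        by (rule adjoint_works[OF inv_lin[OF lin dt]])
      thus "((\<lambda>y. n \<bullet> y) \<circ> inv_into UNIV A) y = adjoint (inv_into UNIV A) n \<bullet> y"
        by (simp add: inner_commute)
    qed
    thus ?thesis by (simp add: onorm_inner_eq)
  qed
  finally show ?thesis by (simp add: k_def)
qed


lemma iter_aut:
  assumes "\<And>i. i < N \<Longrightarrow> w i \<in> aut_vol X T"
  shows "\<forall>x\<in>topspace X. (\<exists>y\<in>topspace X. \<forall>v. fst (iter_comp w N (x, v)) = y) \<and>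
           linear (fib (iter_comp w N) x) \<and> \<bar>Determinants.det (matrix (fib (iter_comp w N) x))\<bar> = 1"
  using assms
proof (induction N)
  case 0
  have e: "fib (iter_comp w 0) x = id" for x by (simp add: fib_def id_def)
  show ?case unfolding e by (auto simp: matrix_id_mat_1 det_I intro: bounded_linear.linear[OF bounded_linear_ident])
next
  case (Suc N)
  show ?case
  proof
    fix x assume x: "x \<in> topspace X"
    from Suc.IH Suc.prems x obtain y where y: "y \<in> topspace X" "\<And>v. fst (iter_comp w N (x, v)) = y"
      and lL: "linear (fib (iter_comp w N) x)" and dL: "\<bar>Determinants.det (matrix (fib (iter_comp w N) x))\<bar> = 1"
      by auto
    define L where "L = fib (iter_comp w N) x"
    have it: "iter_comp w N (x, v) = (y, L v)" for v
      using y(2)[of v] by (simp add: L_def fib_def prod_eq_iff)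
    have wN: "w N \<in> aut_vol X T" using Suc.prems by simp
    then obtain f where f: "homeomorphic_map X X f" "\<And>x v. x \<in> topspace X \<Longrightarrow> fst (w N (x, v)) = f x"
      and lM: "linear (fib (w N) y)" and dM: "\<bar>Determinants.det (matrix (fib (w N) y))\<bar> = 1"
      using y(1) unfolding aut_vol_def bundle_aut_def by blast
    have fy: "f y \<in> topspace X" using f(1) y(1) homeomorphic_imp_surjective_map by blast
    have fibeq: "fib (iter_comp w (Suc N)) x = fib (w N) y \<circ> L"
      by (rule ext) (simp add: fib_def it)
    have "\<forall>v. fst (iter_comp w (Suc N) (x, v)) = f y" using it f(2)[OF y(1)] by simp
    moreover have "linear (fib (iter_comp w (Suc N)) x)"
      unfolding fibeq using lL lM L_def by (simp add: linear_compose)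
    moreover have "\<bar>Determinants.det (matrix (fib (iter_comp w (Suc N)) x))\<bar> = 1"
      unfolding fibeq using lL lM dL dM L_def by (simp add: matrix_compose det_mul abs_mult)
    ultimately show "(\<exists>y\<in>topspace X. \<forall>v. fst (iter_comp w (Suc N) (x, v)) = y) \<and>
           linear (fib (iter_comp w (Suc N)) x) \<and> \<bar>Determinants.det (matrix (fib (iter_comp w (Suc N)) x))\<bar> = 1"
      using fy by blast
  qed
qed

lemma integral_eq:
  fixes \<mu> :: "('a \<times> (real^'d) \<Rightarrow> 'a \<times> (real^'d)) measure" and n :: "real^'d"
  assumes sp: "space \<mu> \<subseteq> aut_vol X T" and x: "x \<in> topspace X" and nn: "norm n = 1"
    and V: "subspace V" and dV: "dim V = CARD('d) - 1" and perp: "\<forall>v\<in>V. n \<bullet> v = 0"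
  shows "conv_integral \<mu> N (\<lambda>F. ln (onorm ((\<lambda>y. n \<bullet> y) \<circ> inv (fib F x)))) =
         conv_integral \<mu> N (\<lambda>F. ln (vol_factor (fib F x) V (CARD('d) - 1)))"
  unfolding conv_integral_def
proof (rule Bochner_Integration.integral_cong[OF refl])
  fix w assume w: "w \<in> space (PiM {..<N} (\<lambda>_. \<mu>))"
  have "\<And>i. i < N \<Longrightarrow> w i \<in> aut_vol X T" using w sp by (auto simp: space_PiM PiE_iff)
  from iter_aut[OF this] x have l: "linear (fib (iter_comp w N) x)"
    and d: "\<bar>Determinants.det (matrix (fib (iter_comp w N) x))\<bar> = 1" by auto
  show "ln (onorm ((\<lambda>y. n \<bullet> y) \<circ> inv (fib (iter_comp w N) x))) =
        ln (vol_factor (fib (iter_comp w N) x) V (CARD('d) - 1))"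
    using pw[OF l d nn V dV perp] by simp
qed

theorem proposition3p12:
  fixes X :: "'a topology" and T :: "('a \<times> (real^'d)) topology"
    and \<mu> :: "('a \<times> (real^'d) \<Rightarrow> 'a \<times> (real^'d)) measure"
  assumes "riemannian_bundle X T"
    and "prob_space \<mu>"
    and "space \<mu> \<subseteq> aut_vol X T"
  shows "coexpanding_on_average X \<mu> \<longleftrightarrow> expanding_on_average_planes X \<mu> (CARD('d) - 1)"
proof
  assume "coexpanding_on_average X \<mu>"
  then obtain N c where c: "c > 0" and H: "\<forall>x\<in>topspace X. \<forall>\<xi>::real^'d \<Rightarrow> real. linear \<xi> \<and> onorm \<xi> = 1 \<longrightarrow>
        conv_integral \<mu> N (\<lambda>F. ln (onorm (\<xi> \<circ> inv (fib F x)))) > c"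
    unfolding coexpanding_on_average_def by blast
  show "expanding_on_average_planes X \<mu> (CARD('d) - 1)"
    unfolding expanding_on_average_planes_def
  proof (intro exI[of _ N] exI[of _ c] conjI c ballI allI impI)
    fix x and V :: "(real^'d) set"
    assume x: "x \<in> topspace X" and VV: "subspace V \<and> dim V = CARD('d) - 1"
    have "dim V < DIM(real^'d)" using VV by simp
    then obtain z :: "real^'d" where z: "z \<noteq> 0" "\<And>y. y \<in> span V \<Longrightarrow> real_inner_class.orthogonal z y"
      using orthogonal_to_subspace_exists by blast
    define n where "n = (1 / norm z) *\<^sub>R z"
    have nn: "norm n = 1" using z(1) by (simp add: n_def)
    have perp: "\<forall>v\<in>V. n \<bullet> v = 0"
      using z(2) span_base unfolding n_def real_inner_class.orthogonal_def by fastforce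
    have lin: "linear (\<lambda>y. n \<bullet> y)" by (rule bounded_linear.linear[OF bounded_linear_inner_right])
    have on: "onorm (\<lambda>y. n \<bullet> y) = 1" using nn by (simp add: onorm_inner_eq)
    have "conv_integral \<mu> N (\<lambda>F. ln (onorm ((\<lambda>y. n \<bullet> y) \<circ> inv (fib F x)))) > c"
      using H x lin on by blast
    thus "conv_integral \<mu> N (\<lambda>F. ln (vol_factor (fib F x) V (CARD('d) - 1))) > c"
      using integral_eq[OF assms(3) x nn _ _ perp, of N] VV by simp
  qed
next
  assume "expanding_on_average_planes X \<mu> (CARD('d) - 1)"
  then obtain N c where c: "c > 0" and H: "\<forall>x\<in>topspace X. \<forall>V::(real^'d) set. subspace V \<and> dim V = CARD('d) - 1 \<longrightarrow>
        conv_integral \<mu> N (\<lambda>F. ln (vol_factor (fib F x) V (CARD('d) - 1))) > c"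
    unfolding expanding_on_average_planes_def by blast
  show "coexpanding_on_average X \<mu>"
    unfolding coexpanding_on_average_def
  proof (intro exI[of _ N] exI[of _ c] conjI c ballI allI impI)
    fix x and \<xi> :: "real^'d \<Rightarrow> real"
    assume x: "x \<in> topspace X" and \<xi>: "linear \<xi> \<and> onorm \<xi> = 1"
    define n where "n = adjoint \<xi> 1"
    have \<xi>eq: "\<xi> = (\<lambda>y. n \<bullet> y)"
    proof
      fix y
      have "y \<bullet> adjoint \<xi> 1 = \<xi> y \<bullet> 1" using \<xi> by (simp add: adjoint_works)
      thus "\<xi> y = n \<bullet> y" by (simp add: n_def inner_commute)
    qed
    have nn: "norm n = 1" using \<xi> \<xi>eq onorm_inner_eq by metis
    hence nz: "n \<noteq> 0" by auto
    define V where "V = {y. n \<bullet> y = 0}"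
    have VV: "subspace V" "dim V = CARD('d) - 1"
      unfolding V_def using subspace_hyperplane dim_hyperplane[OF nz] by auto
    have perp: "\<forall>v\<in>V. n \<bullet> v = 0" by (simp add: V_def)
    have "conv_integral \<mu> N (\<lambda>F. ln (vol_factor (fib F x) V (CARD('d) - 1))) > c"
      using H x VV by blast
    thus "conv_integral \<mu> N (\<lambda>F. ln (onorm (\<xi> \<circ> inv (fib F x)))) > c"
      using integral_eq[OF assms(3) x nn VV perp] \<xi>eq by simp
  qed
qed

end
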